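(* Let $A$ and $B$ be $2n\times 2n$ real symmetric positive definite matrices. Then there exist a $2n\times2n$ real symplectic matrix $M$ and $n\times n$ diagonal matrices $D_A,D_B$ with positive diagonal entries such that $M^TAM=D_A\otimes I_2$ and $M^TBM=D_B\otimes I_2$ if and only if $AJB=BJA$.
   Context: $J:=I_n\otimes\begin{pmatrix}0&1\\-1&0\end{pmatrix}$, where $I_n$ is the $n\times n$ identity matrix and $\otimes$ is the Kronecker product. A $2n\times2n$ real matrix $M$ is symplectic if $M^TJM=J$. *)

theory Defs
  imports "Jordan_Normal_Form.Matrix"
begin

definition kron_mat :: "'a::times mat \<Rightarrow> 'a mat \<Rightarrow> 'a mat" where
  "kron_mat A B = mat (dim_row A * dim_row B) (dim_col A * dim_col B)
     (\<lambda>(i, j). A $$ (i div dim_row B, j div dim_col B) * B $$ (i mod dim_row B, j mod dim_col B))"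

definition J2 :: "real mat" where
  "J2 = mat_of_rows_list 2 [[0, 1], [-1, 0]]"

definition Jmat :: "nat \<Rightarrow> real mat" where
  "Jmat n = kron_mat (1\<^sub>m n) J2"

definition symplectic :: "nat \<Rightarrow> real mat \<Rightarrow> bool" where
  "symplectic n M \<longleftrightarrow> M \<in> carrier_mat (2*n) (2*n) \<and> transpose_mat M * Jmat n * M = Jmat n"

definition symmetric_mat :: "real mat \<Rightarrow> bool" where
  "symmetric_mat A \<longleftrightarrow> transpose_mat A = A"

definition pos_def_mat :: "nat \<Rightarrow> real mat \<Rightarrow> bool" where
  "pos_def_mat k A \<longleftrightarrow> A \<in> carrier_mat k k \<and> symmetric_mat A \<and>
     (\<forall>x \<in> carrier_vec k. x \<noteq> 0\<^sub>v k \<longrightarrow> x \<bullet> (A *\<^sub>v x) > 0)"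

end

theory Submission
  imports Defs "Jordan_Normal_Form.Char_Poly"
begin


lemma kernel_nontriv:
  fixes A :: "'a::field mat"
  assumes A: "A \<in> carrier_mat nr nc" and lt: "nr < nc"
  shows "\<exists>v. v \<in> carrier_vec nc \<and> v \<noteq> 0\<^sub>v nc \<and> A *\<^sub>v v = 0\<^sub>v nr"
proof -
  define c where "c = (\<lambda>i. if i < nr then row A i else 0\<^sub>v nc)"
  define A' where "A' = mat\<^sub>r nc nc (\<lambda>i. if i = nc - 1 then 0\<^sub>v nc else c i)"
  have A'c: "A' \<in> carrier_mat nc nc" unfolding A'_def by auto
  have "det A' = 0" unfolding A'_def
    by (rule det_row_0) (use lt A in \<open>auto simp: c_def\<close>)
  then obtain v where v: "v \<in> carrier_vec nc" "v \<noteq> 0\<^sub>v nc" "A' *\<^sub>v v = 0\<^sub>v nc"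
    using det_0_iff_vec_prod_zero_field[OF A'c] by auto
  have "A *\<^sub>v v = 0\<^sub>v nr"
  proof (rule eq_vecI)
    fix i assume "i < dim_vec (0\<^sub>v nr :: 'a vec)"
    hence i: "i < nr" by auto
    have "(A' *\<^sub>v v) $ i = 0" using v(3) i lt by simp
    moreover have "(A' *\<^sub>v v) $ i = row A i \<bullet> v"
      using i lt A unfolding A'_def c_def by auto
    ultimately show "(A *\<^sub>v v) $ i = 0\<^sub>v nr $ i" using i A by auto
  qed (use A in auto)
  with v show ?thesis by auto
qed

fun kry :: "complex mat \<Rightarrow> complex vec \<Rightarrow> nat \<Rightarrow> complex vec" where
  "kry X z 0 = z"
| "kry X z (Suc j) = X *\<^sub>v kry X z j"

lemma kry_carrier: "X \<in> carrier_mat n n \<Longrightarrow> z \<in> carrier_vec n \<Longrightarrow> kry X z j \<in> carrier_vec n"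
  by (induction j) auto

definition evp :: "nat \<Rightarrow> complex mat \<Rightarrow> complex vec \<Rightarrow> complex poly \<Rightarrow> complex vec" where
  "evp n X z q = vec n (\<lambda>i. \<Sum>j<Suc (degree q). coeff q j * (kry X z j $ i))"

lemma evp_bound:
  assumes "degree q < K"
  shows "evp n X z q = vec n (\<lambda>i. \<Sum>j<K. coeff q j * (kry X z j $ i))"
proof -
  have "(\<Sum>j<Suc (degree q). coeff q j * kry X z j $ i) = (\<Sum>j<K. coeff q j * kry X z j $ i)" for i
    by (rule sum.mono_neutral_left) (use assms in \<open>auto simp: coeff_eq_0\<close>)
  thus ?thesis unfolding evp_def by simp
qed

lemma evp_carrier[simp]: "evp n X z q \<in> carrier_vec n"
  unfolding evp_def by auto

lemma evp_dim[simp]: "dim_vec (evp n X z q) = n"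
  unfolding evp_def by auto

lemma evp_add: "evp n X z (p + q) = evp n X z p + evp n X z q"
proof -
  define K where "K = Suc (max (degree p) (degree q))"
  have d: "degree (p+q) < K" "degree p < K" "degree q < K"
    using degree_add_le_max[of p q] unfolding K_def by auto
  show ?thesis unfolding evp_bound[OF d(1)] evp_bound[OF d(2)] evp_bound[OF d(3)]
    by (intro eq_vecI) (auto simp: sum.distrib algebra_simps)
qed

lemma evp_smult: "evp n X z (Polynomial.smult c p) = c \<cdot>\<^sub>v evp n X z p"
proof -
  have d: "degree (Polynomial.smult c p) < Suc (degree p)" "degree p < Suc (degree p)"
    using degree_smult_le[of c p] by auto
  show ?thesis unfolding evp_bound[OF d(1)] evp_bound[OF d(2)]
    by (intro eq_vecI) (auto simp: sum_distrib_left algebra_simps)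
qed

lemma mv_sum: "X \<in> carrier_mat n n \<Longrightarrow> v \<in> carrier_vec n \<Longrightarrow> i < n \<Longrightarrow>
  (X *\<^sub>v v) $ i = (\<Sum>k<n. X $$ (i,k) * v $ k)"
  by (auto simp: scalar_prod_def row_def atLeast0LessThan)

lemma evp_pCons:
  assumes X: "X \<in> carrier_mat n n" and z: "z \<in> carrier_vec n"
  shows "evp n X z (pCons a q) = a \<cdot>\<^sub>v z + X *\<^sub>v evp n X z q"
proof -
  define K where "K = Suc (degree q)"
  have d: "degree (pCons a q) < Suc K" "degree q < K"
    unfolding K_def by (auto simp: degree_pCons_le le_imp_less_Suc)
  show ?thesis unfolding evp_bound[OF d(1)] evp_bound[OF d(2)]
  proof (intro eq_vecI)
    fix i assume "i < dim_vec (a \<cdot>\<^sub>v z + X *\<^sub>v vec n (\<lambda>i. \<Sum>j<K. coeff q j * kry X z j $ i))"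
    hence i: "i < n" using X z by auto
    have "(\<Sum>j<Suc K. coeff (pCons a q) j * kry X z j $ i)
       = a * z $ i + (\<Sum>j<K. coeff q j * kry X z (Suc j) $ i)"
      by (subst sum.lessThan_Suc_shift) simp
    also have "(\<Sum>j<K. coeff q j * kry X z (Suc j) $ i)
       = (\<Sum>j<K. coeff q j * (\<Sum>k<n. X $$ (i,k) * kry X z j $ k))"
      using mv_sum[OF X kry_carrier[OF X z] i] by simp
    also have "\<dots> = (\<Sum>k<n. X $$ (i,k) * (\<Sum>j<K. coeff q j * kry X z j $ k))"
      by (simp add: sum_distrib_left sum.swap[of _ "{..<n}"] algebra_simps)
    also have "\<dots> = (X *\<^sub>v vec n (\<lambda>i. \<Sum>j<K. coeff q j * kry X z j $ i)) $ i"
      by (subst mv_sum[OF X _ i]) auto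
    finally show "vec n (\<lambda>i. \<Sum>j<Suc K. coeff (pCons a q) j * kry X z j $ i) $ i =
         (a \<cdot>\<^sub>v z + X *\<^sub>v vec n (\<lambda>i. \<Sum>j<K. coeff q j * kry X z j $ i)) $ i"
      using i X z by simp
  qed (use X z in auto)
qed

lemma evp_zero: "evp n X z 0 = 0\<^sub>v n"
  unfolding evp_def by auto

lemma evp_one: assumes X: "X \<in> carrier_mat n n" and z: "z \<in> carrier_vec n" shows "evp n X z 1 = z"
proof -
  have "X *\<^sub>v 0\<^sub>v n = 0\<^sub>v n" using X by (intro eq_vecI) (auto simp: scalar_prod_def)
  thus ?thesis using evp_pCons[OF X z, of 1 0] z by (simp add: evp_zero one_pCons)
qed

lemma evp_lin:
  assumes X: "X \<in> carrier_mat n n" and z: "z \<in> carrier_vec n"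
  shows "evp n X z ([:-a, 1:] * q) = X *\<^sub>v evp n X z q + (-a) \<cdot>\<^sub>v evp n X z q"
proof -
  have eq: "[:-a, 1:] * q = Polynomial.smult (-a) q + pCons 0 q"
    by (simp add: mult_pCons_left)
  have "evp n X z ([:-a, 1:] * q) = evp n X z (Polynomial.smult (-a) q) + evp n X z (pCons 0 q)"
    unfolding eq by (rule evp_add)
  also have "\<dots> = (-a) \<cdot>\<^sub>v evp n X z q + (0 \<cdot>\<^sub>v z + X *\<^sub>v evp n X z q)"
    by (simp only: evp_smult evp_pCons[OF X z])
  also have "\<dots> = X *\<^sub>v evp n X z q + (-a) \<cdot>\<^sub>v evp n X z q"
    using X z by (intro eq_vecI) auto
  finally show ?thesis .
qed

locale inv_pred =
  fixes n :: nat and X :: "complex mat" and P :: "complex vec \<Rightarrow> bool"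
  assumes X: "X \<in> carrier_mat n n"
    and Pc: "\<And>v. P v \<Longrightarrow> v \<in> carrier_vec n"
    and Padd: "\<And>v w. P v \<Longrightarrow> P w \<Longrightarrow> P (v + w)"
    and Psm: "\<And>v c. P v \<Longrightarrow> P (c \<cdot>\<^sub>v v)"
    and PX: "\<And>v. P v \<Longrightarrow> P (X *\<^sub>v v)"
begin

lemma P_evp: assumes "P z" shows "P (evp n X z q)"
proof (induction q rule: pCons_induct)
  case 0
  have "0 \<cdot>\<^sub>v z = 0\<^sub>v n" using Pc[OF assms] by auto
  then show ?case using Psm[OF assms, of 0] by (simp add: evp_zero)
next
  case (pCons a p)
  then show ?case using Pc[OF assms] X
    by (simp add: evp_pCons Padd Psm PX assms)
qed

lemma eig_aux:
  assumes "P z"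
  shows "\<forall>q. evp n X z q \<noteq> 0\<^sub>v n \<longrightarrow> evp n X z (q * prod_list (map (\<lambda>a. [:-a,1:]) as)) = 0\<^sub>v n
     \<longrightarrow> (\<exists>w \<mu>. P w \<and> w \<noteq> 0\<^sub>v n \<and> X *\<^sub>v w = \<mu> \<cdot>\<^sub>v w)"
proof (induction as)
  case Nil
  then show ?case by auto
next
  case (Cons a as)
  show ?case
  proof (intro allI impI)
    fix q assume q: "evp n X z q \<noteq> 0\<^sub>v n"
      and q0: "evp n X z (q * prod_list (map (\<lambda>a. [:- a, 1:]) (a # as))) = 0\<^sub>v n"
    have z: "z \<in> carrier_vec n" using Pc[OF assms] .
    show "\<exists>w \<mu>. P w \<and> w \<noteq> 0\<^sub>v n \<and> X *\<^sub>v w = \<mu> \<cdot>\<^sub>v w"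
    proof (cases "evp n X z ([:-a,1:] * q) = 0\<^sub>v n")
      case True
      let ?w = "evp n X z q"
      have eq: "X *\<^sub>v ?w + (-a) \<cdot>\<^sub>v ?w = 0\<^sub>v n" using True evp_lin[OF X z] by simp
      have "X *\<^sub>v ?w = a \<cdot>\<^sub>v ?w"
      proof (intro eq_vecI)
        fix i assume "i < dim_vec (a \<cdot>\<^sub>v ?w)" hence i: "i < n" by simp
        from eq have "(X *\<^sub>v ?w + (-a) \<cdot>\<^sub>v ?w) $ i = 0\<^sub>v n $ i" by (rule arg_cong)
        hence "(X *\<^sub>v ?w) $ i + (-a) * ?w $ i = 0" using i X by simp
        thus "(X *\<^sub>v ?w) $ i = (a \<cdot>\<^sub>v ?w) $ i" using i by simp
      qed (use X in simp)
      then show ?thesis using q P_evp[OF assms] by blast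
    next
      case False
      have "q * prod_list (map (\<lambda>a. [:- a, 1:]) (a # as)) = ([:-a,1:] * q) * prod_list (map (\<lambda>a. [:- a, 1:]) as)"
        by (simp only: list.map prod_list.Cons ac_simps)
      then show ?thesis using Cons.IH False q0 by auto
    qed
  qed
qed

lemma eig_exists:
  assumes Pz: "P z" and z0: "z \<noteq> 0\<^sub>v n"
  shows "\<exists>w \<mu>. P w \<and> w \<noteq> 0\<^sub>v n \<and> X *\<^sub>v w = \<mu> \<cdot>\<^sub>v w"
proof -
  have z: "z \<in> carrier_vec n" using Pc[OF Pz] .
  define K where "K = mat n (Suc n) (\<lambda>(i,j). kry X z j $ i)"
  have Kc: "K \<in> carrier_mat n (Suc n)" unfolding K_def by auto
  obtain c where c: "c \<in> carrier_vec (Suc n)" "c \<noteq> 0\<^sub>v (Suc n)" "K *\<^sub>v c = 0\<^sub>v n"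
    using kernel_nontriv[OF Kc] by auto
  define p where "p = Poly (list_of_vec c)"
  have cp: "coeff p j = (if j < Suc n then c $ j else 0)" for j
    unfolding p_def using c(1) by (auto simp: nth_default_def)
  have dp: "degree p < Suc n" using cp by (intro le_imp_less_Suc degree_le) auto
  have p0: "p \<noteq> 0"
  proof
    assume "p = 0"
    hence "c $ j = 0" if "j < Suc n" for j using cp[of j] that by auto
    hence "c = 0\<^sub>v (Suc n)" using c(1) by (intro eq_vecI) auto
    with c(2) show False by simp
  qed
  have evp0: "evp n X z p = 0\<^sub>v n"
    unfolding evp_bound[OF dp]
  proof (intro eq_vecI)
    fix i assume "i < dim_vec (0\<^sub>v n :: complex vec)"
    hence i: "i < n" by simp
    have "(K *\<^sub>v c) $ i = (\<Sum>j<Suc n. coeff p j * kry X z j $ i)"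
      using i c(1) Kc unfolding K_def by (auto simp: scalar_prod_def cp atLeast0LessThan mult.commute)
    thus "vec n (\<lambda>i. \<Sum>j<Suc n. coeff p j * kry X z j $ i) $ i = 0\<^sub>v n $ i"
      using c(3) i by simp
  qed auto
  obtain as where as: "Polynomial.smult (coeff p (degree p)) (prod_list (map (\<lambda>a. [:-a,1:]) as)) = p"
    using fundamental_theorem_algebra_factorized[of p] by auto
  have lc: "coeff p (degree p) \<noteq> 0" using p0 by simp
  have "coeff p (degree p) \<cdot>\<^sub>v evp n X z (prod_list (map (\<lambda>a. [:-a,1:]) as)) = 0\<^sub>v n"
    using evp0 as evp_smult by metis
  hence e0: "evp n X z (prod_list (map (\<lambda>a. [:-a,1:]) as)) = 0\<^sub>v n"
  proof (intro eq_vecI)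
    fix i assume "i < dim_vec (0\<^sub>v n :: complex vec)" hence i: "i < n" by simp
    assume eq: "coeff p (degree p) \<cdot>\<^sub>v evp n X z (prod_list (map (\<lambda>a. [:-a,1:]) as)) = 0\<^sub>v n"
    from eq have "(coeff p (degree p) \<cdot>\<^sub>v evp n X z (prod_list (map (\<lambda>a. [:-a,1:]) as))) $ i = 0\<^sub>v n $ i"
      by (rule arg_cong)
    hence "coeff p (degree p) * evp n X z (prod_list (map (\<lambda>a. [:-a,1:]) as)) $ i = 0" using i by simp
    thus "evp n X z (prod_list (map (\<lambda>a. [:-a,1:]) as)) $ i = 0\<^sub>v n $ i" using lc i by simp
  qed simp
  hence e: "evp n X z (1 * prod_list (map (\<lambda>a. [:-a,1:]) as)) = 0\<^sub>v n" by simp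
  have "evp n X z 1 \<noteq> 0\<^sub>v n" using evp_one[OF X z] z0 by simp
  thus ?thesis using eig_aux[OF Pz, of as] e by blast
qed

end



definition jent :: "nat \<Rightarrow> nat \<Rightarrow> real" where
  "jent i j = (if i div 2 = j div 2 then (if even i \<and> odd j then 1 else if odd i \<and> even j then -1 else 0) else 0)"

lemma J2_dims[simp]: "dim_row J2 = 2" "dim_col J2 = 2"
  unfolding J2_def mat_of_rows_list_def by auto

lemma J2_index: "i < 2 \<Longrightarrow> j < 2 \<Longrightarrow> J2 $$ (i,j) = (if i = 0 \<and> j = 1 then 1 else if i = 1 \<and> j = 0 then -1 else 0)"
  unfolding J2_def mat_of_rows_list_def
  by (cases i; cases j) (auto simp: less_2_cases_iff)

lemma Jmat_carrier[simp]: "Jmat n \<in> carrier_mat (2*n) (2*n)"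
  unfolding Jmat_def kron_mat_def by auto

lemma Jmat_dims[simp]: "dim_row (Jmat n) = 2*n" "dim_col (Jmat n) = 2*n"
  unfolding Jmat_def kron_mat_def by auto

lemma Jmat_index: assumes "i < 2*n" "j < 2*n" shows "Jmat n $$ (i,j) = jent i j"
proof -
  have i2: "i div 2 < n" and j2: "j div 2 < n" using assms by auto
  have "Jmat n $$ (i,j) = (1\<^sub>m n :: real mat) $$ (i div 2, j div 2) * J2 $$ (i mod 2, j mod 2)"
    unfolding Jmat_def kron_mat_def using assms by (simp add: mult.commute[of n])
  also have "\<dots> = (if i div 2 = j div 2 then 1 else 0) *
     (if i mod 2 = 0 \<and> j mod 2 = 1 then 1 else if i mod 2 = 1 \<and> j mod 2 = 0 then -1 else 0)"
    using i2 j2 by (simp add: J2_index)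
  also have "\<dots> = jent i j" unfolding jent_def
    by (simp add: even_iff_mod_2_eq_zero[symmetric] odd_iff_mod_2_eq_one[symmetric])
  finally show ?thesis .
qed

lemma jent_row: "jent i j = (if even i then (if j = i+1 then 1 else 0) else (if j = i - 1 then -1 else 0))"
  unfolding jent_def by (cases "even i"; cases "even j") (auto elim!: evenE oddE)

lemma jent_col: "jent j i = (if even i then (if j = i+1 then -1 else 0) else (if j = i - 1 then 1 else 0))"
  unfolding jent_def by (cases "even i"; cases "even j") (auto elim!: evenE oddE)

lemma jent_skew: "jent i j = - jent j i"
  unfolding jent_def by auto

lemma sum_delta_nat: "(a::nat) < N \<Longrightarrow> (\<Sum>j<N. (if j = a then c else 0) * g j) = (c * g a :: real)"
proof -
  have "(\<Sum>j<N. (if j = a then c else 0) * g j) = (\<Sum>j<N. if j = a then c * g j else 0)" by (rule sum.cong) auto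
  thus "a < N \<Longrightarrow> ?thesis" by simp
qed

lemma JJ: "Jmat n * Jmat n = - 1\<^sub>m (2*n)"
proof (rule eq_matI)
  fix i k assume "i < dim_row (- 1\<^sub>m (2*n) :: real mat)" "k < dim_col (- 1\<^sub>m (2*n) :: real mat)"
  hence i: "i < 2*n" and k: "k < 2*n" by auto
  have "(Jmat n * Jmat n) $$ (i,k) = (\<Sum>j<2*n. jent i j * jent j k)"
    using i k by (auto simp: scalar_prod_def Jmat_index atLeast0LessThan intro!: sum.cong)
  also have "\<dots> = (if i = k then -1 else 0)"
  proof (cases "even i")
    case True
    hence "i + 1 < 2*n" using i by (auto elim!: evenE)
    then show ?thesis using True by (subst jent_row) (auto simp: sum_delta_nat jent_row)
  next
    case False
    hence "i - 1 < 2*n" using i by auto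
    then show ?thesis using False by (subst jent_row) (auto simp: sum_delta_nat jent_row elim!: oddE)
  qed
  finally show "(Jmat n * Jmat n) $$ (i,k) = (- 1\<^sub>m (2*n)) $$ (i,k)" using i k by auto
qed auto

lemma JtJ: "transpose_mat (Jmat n) * Jmat n = 1\<^sub>m (2*n)"
proof (rule eq_matI)
  fix i k assume "i < dim_row (1\<^sub>m (2*n) :: real mat)" "k < dim_col (1\<^sub>m (2*n) :: real mat)"
  hence i: "i < 2*n" and k: "k < 2*n" by auto
  have "(transpose_mat (Jmat n) * Jmat n) $$ (i,k) = (\<Sum>j<2*n. jent j i * jent j k)"
    using i k by (auto simp: scalar_prod_def Jmat_index atLeast0LessThan intro!: sum.cong)
  also have "\<dots> = (if i = k then 1 else 0)"
  proof (cases "even i")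
    case True
    hence "i + 1 < 2*n" using i by (auto elim!: evenE)
    then show ?thesis using True by (subst jent_col) (auto simp: sum_delta_nat jent_row)
  next
    case False
    hence "i - 1 < 2*n" using i by auto
    then show ?thesis using False by (subst jent_col) (auto simp: sum_delta_nat jent_row elim!: oddE)
  qed
  finally show "(transpose_mat (Jmat n) * Jmat n) $$ (i,k) = (1\<^sub>m (2*n)) $$ (i,k)" using i k by auto
qed auto

lemma JJt: "Jmat n * transpose_mat (Jmat n) = 1\<^sub>m (2*n)"
  using mat_mult_left_right_inverse[OF _ _ JtJ[of n]] by auto

definition bf :: "real mat \<Rightarrow> real vec \<Rightarrow> real vec \<Rightarrow> real" where
  "bf M x y = x \<bullet> (M *\<^sub>v y)"

lemma bf_sum: assumes "M \<in> carrier_mat N N" "x \<in> carrier_vec N" "y \<in> carrier_vec N"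
  shows "bf M x y = (\<Sum>i<N. \<Sum>j<N. x $ i * M $$ (i,j) * y $ j)"
  using assms by (auto simp: bf_def scalar_prod_def atLeast0LessThan sum_distrib_left mult.assoc intro!: sum.cong)

lemma bf_sym: assumes "M \<in> carrier_mat N N" "transpose_mat M = M" "x \<in> carrier_vec N" "y \<in> carrier_vec N"
  shows "bf M x y = bf M y x"
proof -
  have s: "M $$ (i,j) = M $$ (j,i)" if "i < N" "j < N" for i j
    using arg_cong[OF assms(2), of "\<lambda>A. A $$ (j,i)"] that assms(1) by auto
  have "bf M y x = (\<Sum>i<N. \<Sum>j<N. y $ i * M $$ (i,j) * x $ j)" by (rule bf_sum[OF assms(1,4,3)])
  also have "\<dots> = (\<Sum>j<N. \<Sum>i<N. y $ i * M $$ (i,j) * x $ j)" by (rule sum.swap)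
  also have "\<dots> = (\<Sum>j<N. \<Sum>i<N. x $ j * M $$ (j,i) * y $ i)"
  proof (intro sum.cong refl)
    fix j i assume "j \<in> {..<N}" "i \<in> {..<N}"
    hence "M $$ (i,j) = M $$ (j,i)" using s by auto
    thus "y $ i * M $$ (i,j) * x $ j = x $ j * M $$ (j,i) * y $ i" by simp
  qed
  also have "\<dots> = bf M x y" by (rule bf_sum[OF assms(1,3,4), symmetric])
  finally show ?thesis ..
qed

lemma om_skew: assumes "x \<in> carrier_vec (2*n)" "y \<in> carrier_vec (2*n)"
  shows "bf (Jmat n) x y = - bf (Jmat n) y x"
proof -
  have "bf (Jmat n) x y = (\<Sum>i<2*n. \<Sum>j<2*n. x $ i * jent i j * y $ j)"
    using assms by (simp add: bf_sum[OF Jmat_carrier] Jmat_index)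
  also have "\<dots> = (\<Sum>i<2*n. \<Sum>j<2*n. - (y $ j * jent j i * x $ i))"
  proof -
    have e: "x $ i * jent i j * y $ j = - (y $ j * jent j i * x $ i)" for i j
      using jent_skew[of i j] by simp
    show ?thesis by (simp only: e)
  qed
  also have "\<dots> = - (\<Sum>i<2*n. \<Sum>j<2*n. y $ j * jent j i * x $ i)"
    by (simp add: sum_negf)
  also have "\<dots> = - (\<Sum>i<2*n. \<Sum>j<2*n. y $ i * jent i j * x $ j)"
    by (subst sum.swap) simp
  also have "\<dots> = - bf (Jmat n) y x"
    using assms by (simp add: bf_sum[OF Jmat_carrier] Jmat_index)
  finally show ?thesis .
qed

lemma om_self: "x \<in> carrier_vec (2*n) \<Longrightarrow> bf (Jmat n) x x = 0"
  using om_skew[of x n x] by simp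

lemma bf_add_r: "M \<in> carrier_mat N N \<Longrightarrow> x \<in> carrier_vec N \<Longrightarrow> y \<in> carrier_vec N \<Longrightarrow> z \<in> carrier_vec N \<Longrightarrow>
  bf M x (y + z) = bf M x y + bf M x z"
  unfolding bf_def by (simp add: mult_add_distrib_mat_vec scalar_prod_add_distrib[of _ N])

lemma bf_smult_r: "M \<in> carrier_mat N N \<Longrightarrow> x \<in> carrier_vec N \<Longrightarrow> y \<in> carrier_vec N \<Longrightarrow>
  bf M x (c \<cdot>\<^sub>v y) = c * bf M x y"
  unfolding bf_def by (simp add: mult_mat_vec)

lemma bf_add_l: "M \<in> carrier_mat N N \<Longrightarrow> x \<in> carrier_vec N \<Longrightarrow> y \<in> carrier_vec N \<Longrightarrow> z \<in> carrier_vec N \<Longrightarrow>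
  bf M (y + z) x = bf M y x + bf M z x"
  unfolding bf_def by (simp add: add_scalar_prod_distrib[of _ N])

lemma bf_smult_l: "M \<in> carrier_mat N N \<Longrightarrow> x \<in> carrier_vec N \<Longrightarrow> y \<in> carrier_vec N \<Longrightarrow>
  bf M (c \<cdot>\<^sub>v y) x = c * bf M y x"
  unfolding bf_def by (simp add: smult_scalar_prod_distrib[of _ N])

lemma bf_zero_l: "M \<in> carrier_mat N N \<Longrightarrow> x \<in> carrier_vec N \<Longrightarrow> bf M (0\<^sub>v N) x = 0"
  unfolding bf_def by simp

definition cm :: "real mat \<Rightarrow> complex mat" where "cm M = map_mat complex_of_real M"
definition rv :: "complex vec \<Rightarrow> real vec" where "rv z = map_vec Re z"
definition iv :: "complex vec \<Rightarrow> real vec" where "iv z = map_vec Im z"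
definition cv :: "real vec \<Rightarrow> complex vec" where "cv x = map_vec complex_of_real x"

lemma cm_carrier[simp]: "cm M \<in> carrier_mat nr nc \<longleftrightarrow> M \<in> carrier_mat nr nc"
  unfolding cm_def by auto
lemma rv_carrier[simp]: "rv z \<in> carrier_vec n \<longleftrightarrow> z \<in> carrier_vec n"
  unfolding rv_def by auto
lemma iv_carrier[simp]: "iv z \<in> carrier_vec n \<longleftrightarrow> z \<in> carrier_vec n"
  unfolding iv_def by auto
lemma cv_carrier[simp]: "cv x \<in> carrier_vec n \<longleftrightarrow> x \<in> carrier_vec n"
  unfolding cv_def by auto

lemma rv_mult: assumes "M \<in> carrier_mat nr nc" "z \<in> carrier_vec nc"
  shows "rv (cm M *\<^sub>v z) = M *\<^sub>v rv z"
  using assms by (intro eq_vecI) (auto simp: rv_def cm_def scalar_prod_def Re_sum)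

lemma iv_mult: assumes "M \<in> carrier_mat nr nc" "z \<in> carrier_vec nc"
  shows "iv (cm M *\<^sub>v z) = M *\<^sub>v iv z"
  using assms by (intro eq_vecI) (auto simp: iv_def cm_def scalar_prod_def Im_sum)

lemma rv_add: "z \<in> carrier_vec n \<Longrightarrow> w \<in> carrier_vec n \<Longrightarrow> rv (z + w) = rv z + rv w"
  by (intro eq_vecI) (auto simp: rv_def)
lemma iv_add: "z \<in> carrier_vec n \<Longrightarrow> w \<in> carrier_vec n \<Longrightarrow> iv (z + w) = iv z + iv w"
  by (intro eq_vecI) (auto simp: iv_def)
lemma rv_smult: "rv (c \<cdot>\<^sub>v z) = Re c \<cdot>\<^sub>v rv z + (- Im c) \<cdot>\<^sub>v iv z"
  by (intro eq_vecI) (auto simp: rv_def iv_def)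
lemma iv_smult: "iv (c \<cdot>\<^sub>v z) = Im c \<cdot>\<^sub>v rv z + Re c \<cdot>\<^sub>v iv z"
  by (intro eq_vecI) (auto simp: rv_def iv_def)
lemma rv_cv[simp]: "rv (cv x) = x" by (intro eq_vecI) (auto simp: rv_def cv_def)
lemma iv_cv[simp]: "iv (cv x) = 0\<^sub>v (dim_vec x)" by (intro eq_vecI) (auto simp: iv_def cv_def)
lemma cv_zero: "x \<in> carrier_vec n \<Longrightarrow> cv x = 0\<^sub>v n \<Longrightarrow> x = 0\<^sub>v n"
  using rv_cv[of x] by (auto simp: rv_def)
lemma rv_iv_zero: assumes "z \<in> carrier_vec n" "rv z = 0\<^sub>v n" "iv z = 0\<^sub>v n" shows "z = 0\<^sub>v n"
proof (rule eq_vecI)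
  fix i assume "i < dim_vec (0\<^sub>v n :: complex vec)" hence i: "i < n" by simp
  have "Re (z $ i) = 0" "Im (z $ i) = 0"
    using arg_cong[OF assms(2), of "\<lambda>v. v $ i"] arg_cong[OF assms(3), of "\<lambda>v. v $ i"] i assms(1)
    by (auto simp: rv_def iv_def)
  thus "z $ i = 0\<^sub>v n $ i" using i by (simp add: complex_eq_iff)
qed (use assms in auto)

lemma cm_mult: "M \<in> carrier_mat nr n \<Longrightarrow> M' \<in> carrier_mat n nc \<Longrightarrow> cm (M * M') = cm M * cm M'"
  unfolding cm_def by (rule of_real_hom.mat_hom_mult)



lemma pd_carrier: "pos_def_mat k M \<Longrightarrow> M \<in> carrier_mat k k"
  unfolding pos_def_mat_def by auto
lemma pd_sym: "pos_def_mat k M \<Longrightarrow> transpose_mat M = M"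
  unfolding pos_def_mat_def symmetric_mat_def by auto
lemma pd_pos: "pos_def_mat k M \<Longrightarrow> x \<in> carrier_vec k \<Longrightarrow> x \<noteq> 0\<^sub>v k \<Longrightarrow> bf M x x > 0"
  unfolding pos_def_mat_def bf_def by auto

lemma om_zero_r: "x \<in> carrier_vec (2*n) \<Longrightarrow> bf (Jmat n) x (0\<^sub>v (2*n)) = 0"
proof -
  have "Jmat n *\<^sub>v 0\<^sub>v (2*n) = 0\<^sub>v (2*n)" by (intro eq_vecI) (auto simp: scalar_prod_def)
  thus "x \<in> carrier_vec (2*n) \<Longrightarrow> ?thesis" unfolding bf_def by simp
qed

lemma om_T_r: assumes M: "M \<in> carrier_mat (2*n) (2*n)" and x: "x \<in> carrier_vec (2*n)" and z: "z \<in> carrier_vec (2*n)"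
  shows "bf (Jmat n) x ((Jmat n * M) *\<^sub>v z) = - bf M x z"
proof -
  have "(Jmat n * M) *\<^sub>v z = Jmat n *\<^sub>v (M *\<^sub>v z)" by (rule assoc_mult_mat_vec[OF Jmat_carrier M z])
  also have "Jmat n *\<^sub>v \<dots> = (Jmat n * Jmat n) *\<^sub>v (M *\<^sub>v z)"
    by (rule assoc_mult_mat_vec[OF Jmat_carrier Jmat_carrier, symmetric]) (use M z in simp)
  also have "\<dots> = - (M *\<^sub>v z)" unfolding JJ using M z by simp
  finally show ?thesis unfolding bf_def using M x z by simp
qed

lemma om_T_l: assumes M: "M \<in> carrier_mat (2*n) (2*n)" and s: "transpose_mat M = M"
  and x: "x \<in> carrier_vec (2*n)" and z: "z \<in> carrier_vec (2*n)"
  shows "bf (Jmat n) ((Jmat n * M) *\<^sub>v x) z = bf M x z"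
proof -
  have Tx: "(Jmat n * M) *\<^sub>v x \<in> carrier_vec (2*n)"
    by (rule mult_mat_vec_carrier[OF mult_carrier_mat[OF Jmat_carrier M] x])
  have "bf (Jmat n) ((Jmat n * M) *\<^sub>v x) z = - bf (Jmat n) z ((Jmat n * M) *\<^sub>v x)"
    by (rule om_skew[OF Tx z])
  also have "\<dots> = bf M z x" using om_T_r[OF M z x] by simp
  also have "\<dots> = bf M x z" by (rule bf_sym[OF M s z x])
  finally show ?thesis .
qed

lemma block:
  assumes pd: "pos_def_mat (2*n) M" and x: "x \<in> carrier_vec (2*n)" and y: "y \<in> carrier_vec (2*n)"
    and nz: "x \<noteq> 0\<^sub>v (2*n) \<or> y \<noteq> 0\<^sub>v (2*n)"
    and Tx: "(Jmat n * M) *\<^sub>v x = p \<cdot>\<^sub>v x + (-q) \<cdot>\<^sub>v y"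
    and Ty: "(Jmat n * M) *\<^sub>v y = q \<cdot>\<^sub>v x + p \<cdot>\<^sub>v y"
  shows "bf (Jmat n) x y \<noteq> 0" "bf M x y = 0" "bf M x x = q * bf (Jmat n) x y" "bf M y y = q * bf (Jmat n) x y"
    "\<And>z. z \<in> carrier_vec (2*n) \<Longrightarrow> bf (Jmat n) x z = 0 \<Longrightarrow> bf (Jmat n) y z = 0 \<Longrightarrow> bf M x z = 0 \<and> bf M y z = 0"
proof -
  note Mc = pd_carrier[OF pd] and Ms = pd_sym[OF pd]
  note Jc = Jmat_carrier[of n]
  define c where "c = bf (Jmat n) x y"
  have yx: "bf (Jmat n) y x = - c" unfolding c_def using om_skew[OF y x] by simp
  have xx: "bf (Jmat n) x x = 0" by (rule om_self[OF x])
  have yy: "bf (Jmat n) y y = 0" by (rule om_self[OF y])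
  have lin: "bf (Jmat n) w (a \<cdot>\<^sub>v x + b \<cdot>\<^sub>v y) = a * bf (Jmat n) w x + b * bf (Jmat n) w y"
    if w: "w \<in> carrier_vec (2*n)" for w a b
    using bf_add_r[OF Jc w, of "a \<cdot>\<^sub>v x" "b \<cdot>\<^sub>v y"] bf_smult_r[OF Jc w] x y by simp
  have linl: "bf (Jmat n) (a \<cdot>\<^sub>v x + b \<cdot>\<^sub>v y) w = a * bf (Jmat n) x w + b * bf (Jmat n) y w"
    if w: "w \<in> carrier_vec (2*n)" for w a b
    using bf_add_l[OF Jc w, of "a \<cdot>\<^sub>v x" "b \<cdot>\<^sub>v y"] bf_smult_l[OF Jc w] x y by simp
  have hxx: "bf M x x = q * c"
    using om_T_r[OF Mc x x] lin[OF x, of p "-q"] unfolding Tx by (simp add: xx c_def)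
  have hyy: "bf M y y = q * c"
    using om_T_r[OF Mc y y] lin[OF y, of q p] unfolding Ty by (simp add: yy yx)
  have hxy: "bf M x y = - (p * c)"
    using om_T_r[OF Mc x y] lin[OF x, of q p] unfolding Ty by (simp add: xx c_def)
  have hyx: "bf M y x = p * c"
    using om_T_r[OF Mc y x] lin[OF y, of p "-q"] unfolding Tx by (simp add: yy yx)
  have pc: "p * c = 0" using hxy hyx bf_sym[OF Mc Ms x y] by simp
  have c0: "c \<noteq> 0"
  proof
    assume "c = 0"
    hence "bf M x x = 0" "bf M y y = 0" using hxx hyy by auto
    hence "x = 0\<^sub>v (2*n)" "y = 0\<^sub>v (2*n)" using pd_pos[OF pd x] pd_pos[OF pd y] by force+
    with nz show False by simp
  qed
  show "bf (Jmat n) x y \<noteq> 0" using c0 c_def by simp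
  show "bf M x y = 0" using hxy pc by simp
  show "bf M x x = q * bf (Jmat n) x y" using hxx c_def by simp
  show "bf M y y = q * bf (Jmat n) x y" using hyy c_def by simp
  fix z assume z: "z \<in> carrier_vec (2*n)" and xz: "bf (Jmat n) x z = 0" and yz: "bf (Jmat n) y z = 0"
  have "bf M x z = bf (Jmat n) ((Jmat n * M) *\<^sub>v x) z" using om_T_l[OF Mc Ms x z] by simp
  also have "\<dots> = 0" unfolding Tx linl[OF z] using xz yz by simp
  finally have 1: "bf M x z = 0" .
  have "bf M y z = bf (Jmat n) ((Jmat n * M) *\<^sub>v y) z" using om_T_l[OF Mc Ms y z] by simp
  also have "\<dots> = 0" unfolding Ty linl[OF z] using xz yz by simp
  finally show "bf M x z = 0 \<and> bf M y z = 0" using 1 by simp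
qed



definition Wsp :: "nat \<Rightarrow> nat \<Rightarrow> (nat \<Rightarrow> real vec) \<Rightarrow> real vec \<Rightarrow> bool" where
  "Wsp n m b z \<longleftrightarrow> z \<in> carrier_vec (2*n) \<and> (\<forall>l<2*m. bf (Jmat n) (b l) z = 0)"

definition sinv :: "nat \<Rightarrow> real mat \<Rightarrow> real mat \<Rightarrow> nat \<Rightarrow> (nat \<Rightarrow> real vec) \<Rightarrow> bool" where
  "sinv n A B m b \<longleftrightarrow> (\<forall>i<2*m. b i \<in> carrier_vec (2*n)) \<and>
   (\<forall>i<2*m. \<forall>j<2*m. bf (Jmat n) (b i) (b j) = jent i j) \<and>
   (\<forall>i<2*m. \<forall>j<2*m. i \<noteq> j \<longrightarrow> bf A (b i) (b j) = 0 \<and> bf B (b i) (b j) = 0) \<and>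
   (\<forall>i<m. bf A (b (2*i)) (b (2*i)) = bf A (b (2*i+1)) (b (2*i+1)) \<and>
          bf B (b (2*i)) (b (2*i)) = bf B (b (2*i+1)) (b (2*i+1))) \<and>
   (\<forall>j<2*m. \<forall>z. Wsp n m b z \<longrightarrow> bf A (b j) z = 0 \<and> bf B (b j) z = 0)"

lemma Wsp_add: "Wsp n m b x \<Longrightarrow> Wsp n m b y \<Longrightarrow> (\<forall>i<2*m. b i \<in> carrier_vec (2*n)) \<Longrightarrow> Wsp n m b (x + y)"
  unfolding Wsp_def by (auto simp: bf_add_r[OF Jmat_carrier])

lemma Wsp_smult: "Wsp n m b x \<Longrightarrow> (\<forall>i<2*m. b i \<in> carrier_vec (2*n)) \<Longrightarrow> Wsp n m b (c \<cdot>\<^sub>v x)"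
  unfolding Wsp_def by (auto simp: bf_smult_r[OF Jmat_carrier])

lemma Wsp_zero: "(\<forall>i<2*m. b i \<in> carrier_vec (2*n)) \<Longrightarrow> Wsp n m b (0\<^sub>v (2*n))"
  unfolding Wsp_def by (auto simp: om_zero_r)

lemma Wsp_T: assumes "Wsp n m b x" "(\<forall>i<2*m. b i \<in> carrier_vec (2*n))" "M \<in> carrier_mat (2*n) (2*n)"
  "\<forall>j<2*m. \<forall>z. Wsp n m b z \<longrightarrow> bf M (b j) z = 0"
  shows "Wsp n m b ((Jmat n * M) *\<^sub>v x)"
  using assms unfolding Wsp_def
  by (auto simp: om_T_r[OF assms(3)] intro!: mult_mat_vec_carrier[OF mult_carrier_mat[OF Jmat_carrier assms(3)]])

lemma sinv_0: "sinv n A B 0 b" unfolding sinv_def by auto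

lemma sinv_step_aux:
  assumes pdA: "pos_def_mat (2*n) A" and pdB: "pos_def_mat (2*n) B"
    and comm: "A * Jmat n * B = B * Jmat n * A"
    and bc: "\<forall>i<2*m. b i \<in> carrier_vec (2*n)"
    and compA: "\<forall>j<2*m. \<forall>z. Wsp n m b z \<longrightarrow> bf A (b j) z = 0"
    and compB: "\<forall>j<2*m. \<forall>z. Wsp n m b z \<longrightarrow> bf B (b j) z = 0"
    and mn: "m < n"
  shows "\<exists>x y pa qa pb qb. Wsp n m b x \<and> Wsp n m b y \<and> (x \<noteq> 0\<^sub>v (2*n) \<or> y \<noteq> 0\<^sub>v (2*n)) \<and>
     (Jmat n * A) *\<^sub>v x = pa \<cdot>\<^sub>v x + (-qa) \<cdot>\<^sub>v y \<and> (Jmat n * A) *\<^sub>v y = qa \<cdot>\<^sub>v x + pa \<cdot>\<^sub>v y \<and>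
     (Jmat n * B) *\<^sub>v x = pb \<cdot>\<^sub>v x + (-qb) \<cdot>\<^sub>v y \<and> (Jmat n * B) *\<^sub>v y = qb \<cdot>\<^sub>v x + pb \<cdot>\<^sub>v y"
proof -
  note Ac = pd_carrier[OF pdA] and Bc = pd_carrier[OF pdB]
  note Jc = Jmat_carrier[of n]
  define T where "T = Jmat n * A"
  define R where "R = Jmat n * B"
  have Tc: "T \<in> carrier_mat (2*n) (2*n)" unfolding T_def by (rule mult_carrier_mat[OF Jc Ac])
  have Rc: "R \<in> carrier_mat (2*n) (2*n)" unfolding R_def by (rule mult_carrier_mat[OF Jc Bc])
  have WT: "Wsp n m b x \<Longrightarrow> Wsp n m b (T *\<^sub>v x)" for x
    unfolding T_def by (rule Wsp_T[OF _ bc Ac compA])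
  have WR: "Wsp n m b x \<Longrightarrow> Wsp n m b (R *\<^sub>v x)" for x
    unfolding R_def by (rule Wsp_T[OF _ bc Bc compB])
  have JB: "Jmat n * B \<in> carrier_mat (2*n) (2*n)" by (rule mult_carrier_mat[OF Jc Bc])
  have JA: "Jmat n * A \<in> carrier_mat (2*n) (2*n)" by (rule mult_carrier_mat[OF Jc Ac])
  have TR: "T * R = R * T"
  proof -
    have "T * R = Jmat n * (A * (Jmat n * B))" unfolding T_def R_def
      by (rule assoc_mult_mat[OF Jc Ac JB])
    also have "A * (Jmat n * B) = A * Jmat n * B" by (rule assoc_mult_mat[OF Ac Jc Bc, symmetric])
    also note comm
    also have "B * Jmat n * A = B * (Jmat n * A)" by (rule assoc_mult_mat[OF Bc Jc Ac])
    also have "Jmat n * (B * (Jmat n * A)) = R * T" unfolding T_def R_def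
      by (rule assoc_mult_mat[OF Jc Bc JA, symmetric])
    finally show ?thesis .
  qed
  define Nm where "Nm = mat (2*m) (2*n) (\<lambda>(l,i). (transpose_mat (Jmat n) *\<^sub>v b l) $ i)"
  have Nmc: "Nm \<in> carrier_mat (2*m) (2*n)" unfolding Nm_def by simp
  obtain z where z: "z \<in> carrier_vec (2*n)" "z \<noteq> 0\<^sub>v (2*n)" "Nm *\<^sub>v z = 0\<^sub>v (2*m)"
    using kernel_nontriv[OF Nmc] mn by auto
  have Wz: "Wsp n m b z"
    unfolding Wsp_def
  proof (intro conjI allI impI)
    show "z \<in> carrier_vec (2*n)" by (rule z(1))
    fix l assume l: "l < 2*m"
    have bl: "b l \<in> carrier_vec (2*n)" using bc l by auto
    have row: "row Nm l = transpose_mat (Jmat n) *\<^sub>v b l"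
      unfolding Nm_def using l bl by (intro eq_vecI) auto
    have "bf (Jmat n) (b l) z = (transpose_mat (Jmat n) *\<^sub>v b l) \<bullet> z"
      unfolding bf_def using transpose_vec_mult_scalar[OF Jc z(1) bl] by simp
    also have "\<dots> = (Nm *\<^sub>v z) $ l" using l Nmc row by simp
    also have "\<dots> = 0" using z(3) l by simp
    finally show "bf (Jmat n) (b l) z = 0" .
  qed
  define Pc where "Pc w \<longleftrightarrow> w \<in> carrier_vec (2*n) \<and> Wsp n m b (rv w) \<and> Wsp n m b (iv w)" for w
  interpret I1: inv_pred "2*n" "cm T" Pc
  proof (unfold_locales)
    show "cm T \<in> carrier_mat (2*n) (2*n)" using Tc by simp
  next
    fix v assume "Pc v" thus "v \<in> carrier_vec (2*n)" unfolding Pc_def by simp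
  next
    fix v w assume "Pc v" "Pc w" thus "Pc (v + w)" unfolding Pc_def
      by (auto simp: rv_add iv_add intro!: Wsp_add[OF _ _ bc])
  next
    fix v c assume "Pc v" thus "Pc (c \<cdot>\<^sub>v v)" unfolding Pc_def
      by (auto simp: rv_smult iv_smult intro!: Wsp_add[OF _ _ bc] Wsp_smult[OF _ bc])
  next
    fix v assume "Pc v" thus "Pc (cm T *\<^sub>v v)" unfolding Pc_def
      using mult_mat_vec_carrier[OF cm_carrier[THEN iffD2, OF Tc]]
      by (auto simp: rv_mult[OF Tc] iv_mult[OF Tc] intro!: WT)
  qed
  have Pz: "Pc (cv z)" unfolding Pc_def using z Wz Wsp_zero[OF bc] by auto
  have cz: "cv z \<noteq> 0\<^sub>v (2*n)" using cv_zero[OF z(1)] z(2) by auto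
  obtain w1 lam where w1: "Pc w1" "w1 \<noteq> 0\<^sub>v (2*n)" "cm T *\<^sub>v w1 = lam \<cdot>\<^sub>v w1"
    using I1.eig_exists[OF Pz cz] by blast
  define Pc2 where "Pc2 w \<longleftrightarrow> Pc w \<and> cm T *\<^sub>v w = lam \<cdot>\<^sub>v w" for w
  have cTR: "cm T * cm R = cm R * cm T" using TR cm_mult[OF Tc Rc] cm_mult[OF Rc Tc] by simp
  have cTc: "cm T \<in> carrier_mat (2*n) (2*n)" and cRc: "cm R \<in> carrier_mat (2*n) (2*n)" using Tc Rc by auto
  have PcR: "Pc v \<Longrightarrow> Pc (cm R *\<^sub>v v)" for v unfolding Pc_def
    using mult_mat_vec_carrier[OF cm_carrier[THEN iffD2, OF Rc]]
    by (auto simp: rv_mult[OF Rc] iv_mult[OF Rc] intro!: WR)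
  interpret I2: inv_pred "2*n" "cm R" Pc2
  proof (unfold_locales)
    show "cm R \<in> carrier_mat (2*n) (2*n)" using Rc by simp
  next
    fix v assume "Pc2 v" thus "v \<in> carrier_vec (2*n)" unfolding Pc2_def Pc_def by simp
  next
    fix v w assume v: "Pc2 v" and w: "Pc2 w"
    have vc: "v \<in> carrier_vec (2*n)" and wc: "w \<in> carrier_vec (2*n)" using v w unfolding Pc2_def Pc_def by auto
    have "cm T *\<^sub>v (v + w) = cm T *\<^sub>v v + cm T *\<^sub>v w" by (rule mult_add_distrib_mat_vec[OF cTc vc wc])
    also have "\<dots> = lam \<cdot>\<^sub>v v + lam \<cdot>\<^sub>v w" using v w unfolding Pc2_def by simp
    also have "\<dots> = lam \<cdot>\<^sub>v (v + w)" by (rule smult_add_distrib_vec[OF vc wc, symmetric])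
    finally show "Pc2 (v + w)" using v w I1.Padd unfolding Pc2_def by simp
  next
    fix v c assume v: "Pc2 v"
    have vc: "v \<in> carrier_vec (2*n)" using v unfolding Pc2_def Pc_def by auto
    have "cm T *\<^sub>v (c \<cdot>\<^sub>v v) = c \<cdot>\<^sub>v (cm T *\<^sub>v v)" by (rule mult_mat_vec[OF cTc vc])
    also have "\<dots> = c \<cdot>\<^sub>v (lam \<cdot>\<^sub>v v)" using v unfolding Pc2_def by simp
    also have "\<dots> = lam \<cdot>\<^sub>v (c \<cdot>\<^sub>v v)" by (simp add: smult_smult_assoc mult.commute)
    finally show "Pc2 (c \<cdot>\<^sub>v v)" using v I1.Psm unfolding Pc2_def by simp
  next
    fix v assume v: "Pc2 v"
    have vc: "v \<in> carrier_vec (2*n)" using v unfolding Pc2_def Pc_def by auto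
    have "cm T *\<^sub>v (cm R *\<^sub>v v) = (cm T * cm R) *\<^sub>v v" by (rule assoc_mult_mat_vec[OF cTc cRc vc, symmetric])
    also have "\<dots> = cm R *\<^sub>v (cm T *\<^sub>v v)" unfolding cTR by (rule assoc_mult_mat_vec[OF cRc cTc vc])
    also have "\<dots> = cm R *\<^sub>v (lam \<cdot>\<^sub>v v)" using v unfolding Pc2_def by simp
    also have "\<dots> = lam \<cdot>\<^sub>v (cm R *\<^sub>v v)" by (rule mult_mat_vec[OF cRc vc])
    finally show "Pc2 (cm R *\<^sub>v v)" using v PcR unfolding Pc2_def by simp
  qed
  have Pw1: "Pc2 w1" using w1 unfolding Pc2_def by simp
  obtain w mu where w: "Pc2 w" "w \<noteq> 0\<^sub>v (2*n)" "cm R *\<^sub>v w = mu \<cdot>\<^sub>v w"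
    using I2.eig_exists[OF Pw1 w1(2)] by blast
  have wc: "w \<in> carrier_vec (2*n)" and Wx: "Wsp n m b (rv w)" and Wy: "Wsp n m b (iv w)"
    and Tw: "cm T *\<^sub>v w = lam \<cdot>\<^sub>v w" using w(1) unfolding Pc2_def Pc_def by auto
  have Tx: "T *\<^sub>v rv w = Re lam \<cdot>\<^sub>v rv w + (- Im lam) \<cdot>\<^sub>v iv w"
    using rv_mult[OF Tc wc] Tw rv_smult by metis
  have Ty: "T *\<^sub>v iv w = Im lam \<cdot>\<^sub>v rv w + Re lam \<cdot>\<^sub>v iv w"
    using iv_mult[OF Tc wc] Tw iv_smult by metis
  have Rx: "R *\<^sub>v rv w = Re mu \<cdot>\<^sub>v rv w + (- Im mu) \<cdot>\<^sub>v iv w"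
    using rv_mult[OF Rc wc] w(3) rv_smult by metis
  have Ry: "R *\<^sub>v iv w = Im mu \<cdot>\<^sub>v rv w + Re mu \<cdot>\<^sub>v iv w"
    using iv_mult[OF Rc wc] w(3) iv_smult by metis
  have nz: "rv w \<noteq> 0\<^sub>v (2*n) \<or> iv w \<noteq> 0\<^sub>v (2*n)" using rv_iv_zero[OF wc] w(2) by blast
  show ?thesis using Wx Wy nz Tx Ty Rx Ry unfolding T_def R_def by blast
qed


lemma jent_new:
  "i < 2*m \<Longrightarrow> jent i (2*m) = 0" "i < 2*m \<Longrightarrow> jent i (Suc (2*m)) = 0"
  "i < 2*m \<Longrightarrow> jent (2*m) i = 0" "i < 2*m \<Longrightarrow> jent (Suc (2*m)) i = 0"
  "jent (2*m) (Suc (2*m)) = 1" "jent (Suc (2*m)) (2*m) = -1"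
  "jent (2*m) (2*m) = 0" "jent (Suc (2*m)) (Suc (2*m)) = 0"
  unfolding jent_def by auto

lemma less_2Suc: "i < 2 * Suc m \<longleftrightarrow> i < 2*m \<or> i = 2*m \<or> i = Suc (2*m)"
  by auto

lemma sinv_step:
  assumes pdA: "pos_def_mat (2*n) A" and pdB: "pos_def_mat (2*n) B"
    and comm: "A * Jmat n * B = B * Jmat n * A"
    and I: "sinv n A B m b" and mn: "m < n"
  shows "\<exists>b'. sinv n A B (Suc m) b'"
proof -
  note Ac = pd_carrier[OF pdA] and Bc = pd_carrier[OF pdB]
  note As = pd_sym[OF pdA] and Bs = pd_sym[OF pdB]
  note Jc = Jmat_carrier[of n]
  have bc: "\<forall>i<2*m. b i \<in> carrier_vec (2*n)"
    and bJ: "\<forall>i<2*m. \<forall>j<2*m. bf (Jmat n) (b i) (b j) = jent i j"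
    and bAB: "\<forall>i<2*m. \<forall>j<2*m. i \<noteq> j \<longrightarrow> bf A (b i) (b j) = 0 \<and> bf B (b i) (b j) = 0"
    and bpair: "\<forall>i<m. bf A (b (2*i)) (b (2*i)) = bf A (b (2*i+1)) (b (2*i+1)) \<and>
          bf B (b (2*i)) (b (2*i)) = bf B (b (2*i+1)) (b (2*i+1))"
    and bcomp: "\<forall>j<2*m. \<forall>z. Wsp n m b z \<longrightarrow> bf A (b j) z = 0 \<and> bf B (b j) z = 0"
    using I unfolding sinv_def by blast+
  have compA: "\<forall>j<2*m. \<forall>z. Wsp n m b z \<longrightarrow> bf A (b j) z = 0" using bcomp by blast
  have compB: "\<forall>j<2*m. \<forall>z. Wsp n m b z \<longrightarrow> bf B (b j) z = 0" using bcomp by blast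
  obtain x y pa qa pb qb where Wx: "Wsp n m b x" and Wy: "Wsp n m b y"
    and nz: "x \<noteq> 0\<^sub>v (2*n) \<or> y \<noteq> 0\<^sub>v (2*n)"
    and TAx: "(Jmat n * A) *\<^sub>v x = pa \<cdot>\<^sub>v x + (-qa) \<cdot>\<^sub>v y" and TAy: "(Jmat n * A) *\<^sub>v y = qa \<cdot>\<^sub>v x + pa \<cdot>\<^sub>v y"
    and TBx: "(Jmat n * B) *\<^sub>v x = pb \<cdot>\<^sub>v x + (-qb) \<cdot>\<^sub>v y" and TBy: "(Jmat n * B) *\<^sub>v y = qb \<cdot>\<^sub>v x + pb \<cdot>\<^sub>v y"
    using sinv_step_aux[OF pdA pdB comm bc compA compB mn] by blast
  have xc: "x \<in> carrier_vec (2*n)" and yc: "y \<in> carrier_vec (2*n)" using Wx Wy unfolding Wsp_def by auto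
  note bA = block[OF pdA xc yc nz TAx TAy]
  note bB = block[OF pdB xc yc nz TBx TBy]
  define c where "c = bf (Jmat n) x y"
  have c0: "c \<noteq> 0" using bA(1) c_def by simp
  define s where "s = 1 / sqrt \<bar>c\<bar>"
  define t where "t = sgn c / sqrt \<bar>c\<bar>"
  have sq: "sqrt \<bar>c\<bar> * sqrt \<bar>c\<bar> = \<bar>c\<bar>" by simp
  have sqpos: "sqrt \<bar>c\<bar> > 0" using c0 by simp
  have s0: "s \<noteq> 0" and t0: "t \<noteq> 0" using sqpos c0 unfolding s_def t_def by (auto simp: sgn_if)
  have stc: "s * t * c = 1"
  proof -
    have "s * t * c = sgn c * c / (sqrt \<bar>c\<bar> * sqrt \<bar>c\<bar>)" unfolding s_def t_def by simp
    also have "\<dots> = 1" unfolding sq using c0 by (simp add: sgn_mult_abs abs_sgn[symmetric] mult.commute)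
    finally show ?thesis .
  qed
  have sst: "s * s = t * t" unfolding s_def t_def using c0 by (simp add: sgn_if)
  define u where "u = s \<cdot>\<^sub>v x"
  define v where "v = t \<cdot>\<^sub>v y"
  have uc: "u \<in> carrier_vec (2*n)" and vc: "v \<in> carrier_vec (2*n)" unfolding u_def v_def using xc yc by auto
  have Wu: "Wsp n m b u" unfolding u_def by (rule Wsp_smult[OF Wx bc])
  have Wv: "Wsp n m b v" unfolding v_def by (rule Wsp_smult[OF Wy bc])
  have om_uv: "bf (Jmat n) u v = 1"
    unfolding u_def v_def using xc yc stc c_def by (simp add: bf_smult_l[OF Jc] bf_smult_r[OF Jc] ac_simps)
  have om_vu: "bf (Jmat n) v u = -1" using om_skew[OF vc uc] om_uv by simp
  have om_uu: "bf (Jmat n) u u = 0" by (rule om_self[OF uc])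
  have om_vv: "bf (Jmat n) v v = 0" by (rule om_self[OF vc])
  have om_bu: "bf (Jmat n) (b i) u = 0" "bf (Jmat n) (b i) v = 0"
    "bf (Jmat n) u (b i) = 0" "bf (Jmat n) v (b i) = 0" if "i < 2*m" for i
  proof -
    have bi: "b i \<in> carrier_vec (2*n)" using bc that by auto
    show 1: "bf (Jmat n) (b i) u = 0" using Wu that unfolding Wsp_def by auto
    show 2: "bf (Jmat n) (b i) v = 0" using Wv that unfolding Wsp_def by auto
    show "bf (Jmat n) u (b i) = 0" using om_skew[OF uc bi] 1 by simp
    show "bf (Jmat n) v (b i) = 0" using om_skew[OF vc bi] 2 by simp
  qed
  have M_uv: "bf M u v = 0 \<and> bf M v u = 0" if "M = A \<or> M = B" for M
  proof -
    have pd: "pos_def_mat (2*n) M" using that pdA pdB by auto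
    have "bf M x y = 0" using that bA(2) bB(2) by auto
    hence "bf M u v = 0" unfolding u_def v_def using xc yc pd_carrier[OF pd]
      by (simp add: bf_smult_l bf_smult_r)
    moreover have "bf M v u = bf M u v" by (rule bf_sym[OF pd_carrier[OF pd] pd_sym[OF pd] vc uc])
    ultimately show ?thesis by simp
  qed
  have M_uu: "bf M u u = bf M v v" if "M = A \<or> M = B" for M
  proof -
    have pd: "pos_def_mat (2*n) M" using that pdA pdB by auto
    have "bf M x x = bf M y y" using that bA(3,4) bB(3,4) by auto
    hence "s * (s * bf M x x) = t * (t * bf M y y)" using sst by (simp add: mult.assoc[symmetric])
    thus ?thesis unfolding u_def v_def using xc yc pd_carrier[OF pd]
      by (simp add: bf_smult_l bf_smult_r)
  qed
  have M_bu: "bf M (b i) u = 0 \<and> bf M (b i) v = 0 \<and> bf M u (b i) = 0 \<and> bf M v (b i) = 0"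
    if "M = A \<or> M = B" "i < 2*m" for M i
  proof -
    have pd: "pos_def_mat (2*n) M" using that pdA pdB by auto
    have bi: "b i \<in> carrier_vec (2*n)" using bc that by auto
    have 1: "bf M (b i) u = 0" "bf M (b i) v = 0" using that compA compB Wu Wv by auto
    moreover have "bf M u (b i) = bf M (b i) u" by (rule bf_sym[OF pd_carrier[OF pd] pd_sym[OF pd] uc bi])
    moreover have "bf M v (b i) = bf M (b i) v" by (rule bf_sym[OF pd_carrier[OF pd] pd_sym[OF pd] vc bi])
    ultimately show ?thesis by simp
  qed
  have M_comp: "bf M u z = 0 \<and> bf M v z = 0"
    if "M = A \<or> M = B" "z \<in> carrier_vec (2*n)" "bf (Jmat n) u z = 0" "bf (Jmat n) v z = 0" for M z
  proof -
    have pd: "pos_def_mat (2*n) M" using that pdA pdB by auto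
    have "s * bf (Jmat n) x z = 0" "t * bf (Jmat n) y z = 0"
      using that(3,4) unfolding u_def v_def using xc yc that(2) by (simp_all add: bf_smult_l[OF Jc])
    hence xz: "bf (Jmat n) x z = 0" and yz: "bf (Jmat n) y z = 0" using s0 t0 by auto
    have "bf M x z = 0 \<and> bf M y z = 0" using that(1) bA(5)[OF that(2) xz yz] bB(5)[OF that(2) xz yz] by auto
    thus ?thesis unfolding u_def v_def using xc yc that(2) pd_carrier[OF pd]
      by (simp add: bf_smult_l)
  qed
  define b' where "b' = b(2*m := u, Suc (2*m) := v)"
  have b'old: "b' i = b i" if "i < 2*m" for i using that unfolding b'_def by auto
  have b'u: "b' (2*m) = u" and b'v: "b' (Suc (2*m)) = v" unfolding b'_def by auto
  have "sinv n A B (Suc m) b'"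
    unfolding sinv_def
  proof (intro conjI allI impI)
    fix i assume "i < 2 * Suc m"
    thus "b' i \<in> carrier_vec (2*n)" unfolding less_2Suc using b'old b'u b'v bc uc vc by auto
  next
    fix i j assume i: "i < 2 * Suc m" and j: "j < 2 * Suc m"
    show "bf (Jmat n) (b' i) (b' j) = jent i j"
      using i j unfolding less_2Suc
      by (elim disjE) (auto simp: b'old b'u b'v bJ om_bu om_uv om_vu om_uu om_vv jent_new)
  next
    fix i j assume i: "i < 2 * Suc m" and j: "j < 2 * Suc m" and ij: "i \<noteq> j"
    show "bf A (b' i) (b' j) = 0"
      using i j ij unfolding less_2Suc
      by (elim disjE) (auto simp: b'old b'u b'v bAB M_bu M_uv)
    show "bf B (b' i) (b' j) = 0"
      using i j ij unfolding less_2Suc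
      by (elim disjE) (auto simp: b'old b'u b'v bAB M_bu M_uv)
  next
    fix i assume i: "i < Suc m"
    show "bf A (b' (2*i)) (b' (2*i)) = bf A (b' (2*i+1)) (b' (2*i+1))"
    proof (cases "i < m")
      case True thus ?thesis using bpair b'old by auto
    next
      case False hence "i = m" using i by auto
      thus ?thesis using b'u b'v M_uu[of A] by simp
    qed
    show "bf B (b' (2*i)) (b' (2*i)) = bf B (b' (2*i+1)) (b' (2*i+1))"
    proof (cases "i < m")
      case True thus ?thesis using bpair b'old by auto
    next
      case False hence "i = m" using i by auto
      thus ?thesis using b'u b'v M_uu[of B] by simp
    qed
  next
    fix j z assume j: "j < 2 * Suc m" and Wz: "Wsp n (Suc m) b' z"
    have zc: "z \<in> carrier_vec (2*n)" using Wz unfolding Wsp_def by auto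
    have Wz': "Wsp n m b z" unfolding Wsp_def
    proof (intro conjI allI impI)
      fix l assume l: "l < 2*m"
      hence "bf (Jmat n) (b' l) z = 0" using Wz unfolding Wsp_def by auto
      thus "bf (Jmat n) (b l) z = 0" using b'old[OF l] by simp
    qed (rule zc)
    have uz: "bf (Jmat n) u z = 0" and vz: "bf (Jmat n) v z = 0"
      using Wz b'u b'v unfolding Wsp_def by (metis lessI less_2Suc)+
    show "bf A (b' j) z = 0"
      using j unfolding less_2Suc
      using b'old b'u b'v compA Wz' M_comp[of A, OF _ zc uz vz] by auto
    show "bf B (b' j) z = 0"
      using j unfolding less_2Suc
      using b'old b'u b'v compB Wz' M_comp[of B, OF _ zc uz vz] by auto
  qed
  thus ?thesis by blast
qed



lemma kron_diag_entry:
  fixes D :: "real mat"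
  assumes D: "D \<in> carrier_mat n n" and dg: "diagonal_mat D" and i: "i < 2*n" and j: "j < 2*n"
  shows "kron_mat D (1\<^sub>m 2) $$ (i,j) = (if i = j then D $$ (i div 2, i div 2) else 0)"
proof -
  have i2: "i div 2 < n" and j2: "j div 2 < n" using i j by auto
  have e: "kron_mat D (1\<^sub>m 2) $$ (i,j) = D $$ (i div 2, j div 2) * (if i mod 2 = j mod 2 then 1 else 0)"
    unfolding kron_mat_def using D i j i2 j2 by (simp add: mult.commute[of n])
  show ?thesis
  proof (cases "i = j")
    case True thus ?thesis unfolding e by simp
  next
    case False
    hence "i div 2 \<noteq> j div 2 \<or> i mod 2 \<noteq> j mod 2" by (metis div_mult_mod_eq)
    thus ?thesis unfolding e using False dg D i2 j2 unfolding diagonal_mat_def by auto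
  qed
qed

lemma kron_carrier: "D \<in> carrier_mat n n \<Longrightarrow> kron_mat D (1\<^sub>m 2) \<in> carrier_mat (2*n) (2*n)"
  unfolding kron_mat_def by auto

lemma mult_diag_left:
  fixes X Y :: "real mat"
  assumes X: "X \<in> carrier_mat N N" and Y: "Y \<in> carrier_mat N N"
    and d: "\<And>i k. i < N \<Longrightarrow> k < N \<Longrightarrow> X $$ (i,k) = (if i = k then f i else 0)"
    and i: "i < N" and j: "j < N"
  shows "(X * Y) $$ (i,j) = f i * Y $$ (i,j)"
proof -
  have "(X * Y) $$ (i,j) = (\<Sum>k<N. X $$ (i,k) * Y $$ (k,j))"
    using X Y i j by (simp add: scalar_prod_def atLeast0LessThan)
  also have "\<dots> = (\<Sum>k<N. (if k = i then f i else 0) * Y $$ (k,j))"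
    by (rule sum.cong) (auto simp: d i)
  also have "\<dots> = f i * Y $$ (i,j)" by (rule sum_delta_nat[OF i])
  finally show ?thesis .
qed

lemma mult_diag_right:
  fixes X Y :: "real mat"
  assumes X: "X \<in> carrier_mat N N" and Y: "Y \<in> carrier_mat N N"
    and d: "\<And>i k. i < N \<Longrightarrow> k < N \<Longrightarrow> X $$ (i,k) = (if i = k then f i else 0)"
    and i: "i < N" and j: "j < N"
  shows "(Y * X) $$ (i,j) = Y $$ (i,j) * f j"
proof -
  have "(Y * X) $$ (i,j) = (\<Sum>k<N. (if k = j then f j else 0) * Y $$ (i,k))"
    using X Y i j by (auto simp: scalar_prod_def atLeast0LessThan d mult.commute intro!: sum.cong)
  also have "\<dots> = f j * Y $$ (i,j)" by (rule sum_delta_nat[OF j])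
  finally show ?thesis by simp
qed

lemma kron_comm:
  fixes D1 D2 :: "real mat"
  assumes D1: "D1 \<in> carrier_mat n n" "diagonal_mat D1" and D2: "D2 \<in> carrier_mat n n" "diagonal_mat D2"
  shows "kron_mat D1 (1\<^sub>m 2) * Jmat n * kron_mat D2 (1\<^sub>m 2) = kron_mat D2 (1\<^sub>m 2) * Jmat n * kron_mat D1 (1\<^sub>m 2)"
proof -
  define K1 where "K1 = kron_mat D1 (1\<^sub>m 2)"
  define K2 where "K2 = kron_mat D2 (1\<^sub>m 2)"
  have K1c: "K1 \<in> carrier_mat (2*n) (2*n)" and K2c: "K2 \<in> carrier_mat (2*n) (2*n)"
    unfolding K1_def K2_def using kron_carrier D1 D2 by auto
  note Jc = Jmat_carrier[of n]
  have d1: "K1 $$ (i,k) = (if i = k then D1 $$ (i div 2, i div 2) else 0)" if "i < 2*n" "k < 2*n" for i k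
    unfolding K1_def by (rule kron_diag_entry[OF D1 that])
  have d2: "K2 $$ (i,k) = (if i = k then D2 $$ (i div 2, i div 2) else 0)" if "i < 2*n" "k < 2*n" for i k
    unfolding K2_def by (rule kron_diag_entry[OF D2 that])
  have e: "(Ka * Jmat n * Kb) $$ (i,j) = fa i * jent i j * fb j"
    if Ka: "Ka \<in> carrier_mat (2*n) (2*n)" and Kb: "Kb \<in> carrier_mat (2*n) (2*n)"
      and da: "\<And>i k. i < 2*n \<Longrightarrow> k < 2*n \<Longrightarrow> Ka $$ (i,k) = (if i = k then fa i else 0)"
      and db: "\<And>i k. i < 2*n \<Longrightarrow> k < 2*n \<Longrightarrow> Kb $$ (i,k) = (if i = k then fb i else 0)"
      and i: "i < 2*n" and j: "j < 2*n" for Ka Kb fa fb i j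
  proof -
    have KJ: "Ka * Jmat n \<in> carrier_mat (2*n) (2*n)" using Ka Jc by (rule mult_carrier_mat)
    have "(Ka * Jmat n * Kb) $$ (i,j) = (Ka * Jmat n) $$ (i,j) * fb j"
      by (rule mult_diag_right[OF Kb KJ db i j])
    also have "(Ka * Jmat n) $$ (i,j) = fa i * Jmat n $$ (i,j)"
      by (rule mult_diag_left[OF Ka Jc da i j])
    finally show ?thesis using Jmat_index[OF i j] by simp
  qed
  have "K1 * Jmat n * K2 = K2 * Jmat n * K1"
  proof (rule eq_matI)
    fix i j assume "i < dim_row (K2 * Jmat n * K1)" "j < dim_col (K2 * Jmat n * K1)"
    hence i: "i < 2*n" and j: "j < 2*n" using K1c K2c by auto
    have l: "(K1 * Jmat n * K2) $$ (i,j) = D1 $$ (i div 2, i div 2) * jent i j * D2 $$ (j div 2, j div 2)"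
      by (rule e[OF K1c K2c d1 d2 i j])
    have r: "(K2 * Jmat n * K1) $$ (i,j) = D2 $$ (i div 2, i div 2) * jent i j * D1 $$ (j div 2, j div 2)"
      by (rule e[OF K2c K1c d2 d1 i j])
    show "(K1 * Jmat n * K2) $$ (i,j) = (K2 * Jmat n * K1) $$ (i,j)"
      unfolding l r by (cases "i div 2 = j div 2") (auto simp: jent_def)
  qed (use K1c K2c in auto)
  thus ?thesis unfolding K1_def K2_def .
qed

lemma c2: "(A :: real mat) \<in> carrier_mat (2*n) (2*n) \<Longrightarrow> B \<in> carrier_mat (2*n) (2*n) \<Longrightarrow> A * B \<in> carrier_mat (2*n) (2*n)"
  by (rule mult_carrier_mat)
lemma a2: "(A :: real mat) \<in> carrier_mat (2*n) (2*n) \<Longrightarrow> B \<in> carrier_mat (2*n) (2*n) \<Longrightarrow> C \<in> carrier_mat (2*n) (2*n) \<Longrightarrow>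
  A * B * C = A * (B * C)"
  by (rule assoc_mult_mat)
lemma r1: "(A :: real mat) \<in> carrier_mat (2*n) (2*n) \<Longrightarrow> A * 1\<^sub>m (2*n) = A" by (rule right_mult_one_mat)
lemma l1: "(A :: real mat) \<in> carrier_mat (2*n) (2*n) \<Longrightarrow> 1\<^sub>m (2*n) * A = A" by (rule left_mult_one_mat)



lemma L_E: "(Mt::real mat) \<in> carrier_mat (2*n) (2*n) \<Longrightarrow> X \<in> carrier_mat (2*n) (2*n) \<Longrightarrow> M \<in> carrier_mat (2*n) (2*n) \<Longrightarrow>
  J \<in> carrier_mat (2*n) (2*n) \<Longrightarrow> Y \<in> carrier_mat (2*n) (2*n) \<Longrightarrow>
  Mt * X * M * J * (Mt * Y * M) = Mt * X * (M * (J * Mt)) * (Y * M)"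
  by (simp add: a2 c2)
lemma L_E2: "(Mt::real mat) \<in> carrier_mat (2*n) (2*n) \<Longrightarrow> X \<in> carrier_mat (2*n) (2*n) \<Longrightarrow> M \<in> carrier_mat (2*n) (2*n) \<Longrightarrow>
  J \<in> carrier_mat (2*n) (2*n) \<Longrightarrow> Y \<in> carrier_mat (2*n) (2*n) \<Longrightarrow>
  Mt * X * J * (Y * M) = Mt * (X * J * Y) * M"
  by (simp add: a2 c2)
lemma L_c1: "(P::real mat) \<in> carrier_mat (2*n) (2*n) \<Longrightarrow> X \<in> carrier_mat (2*n) (2*n) \<Longrightarrow> M \<in> carrier_mat (2*n) (2*n) \<Longrightarrow>
  Mt \<in> carrier_mat (2*n) (2*n) \<Longrightarrow> N \<in> carrier_mat (2*n) (2*n) \<Longrightarrow>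
  P * (Mt * X * M) * N = P * Mt * X * (M * N)"
  by (simp add: a2 c2)
lemma L_p: "(Jt::real mat) \<in> carrier_mat (2*n) (2*n) \<Longrightarrow> M \<in> carrier_mat (2*n) (2*n) \<Longrightarrow> J \<in> carrier_mat (2*n) (2*n) \<Longrightarrow>
  Mt \<in> carrier_mat (2*n) (2*n) \<Longrightarrow> Jt * (M * J) * Mt = Jt * (M * (J * Mt))"
  by (simp add: a2 c2)
lemma L_n: "(Jt::real mat) \<in> carrier_mat (2*n) (2*n) \<Longrightarrow> M \<in> carrier_mat (2*n) (2*n) \<Longrightarrow> J \<in> carrier_mat (2*n) (2*n) \<Longrightarrow>
  Mt \<in> carrier_mat (2*n) (2*n) \<Longrightarrow> Jt * (Mt * J) * M = Jt * (Mt * J * M)"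
  by (simp add: a2 c2)

lemma forward:
  assumes Ac: "A \<in> carrier_mat (2*n) (2*n)" and Bc: "B \<in> carrier_mat (2*n) (2*n)"
    and symp: "symplectic n M"
    and DA: "DA \<in> carrier_mat n n" "diagonal_mat DA" and DB: "DB \<in> carrier_mat n n" "diagonal_mat DB"
    and HA: "transpose_mat M * A * M = kron_mat DA (1\<^sub>m 2)"
    and HB: "transpose_mat M * B * M = kron_mat DB (1\<^sub>m 2)"
  shows "A * Jmat n * B = B * Jmat n * A"
proof -
  define J where "J = Jmat n"
  define Jt where "Jt = transpose_mat (Jmat n)"
  define Mt where "Mt = transpose_mat M"
  define K1 where "K1 = kron_mat DA (1\<^sub>m 2)"
  define K2 where "K2 = kron_mat DB (1\<^sub>m 2)"
  have Mc: "M \<in> carrier_mat (2*n) (2*n)" and Ms: "Mt * J * M = J"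
    using symp unfolding symplectic_def Mt_def J_def by auto
  have Jc: "J \<in> carrier_mat (2*n) (2*n)" unfolding J_def by simp
  have Jtc: "Jt \<in> carrier_mat (2*n) (2*n)" unfolding Jt_def by simp
  have Mtc: "Mt \<in> carrier_mat (2*n) (2*n)" unfolding Mt_def using Mc by simp
  have K1c: "K1 \<in> carrier_mat (2*n) (2*n)" unfolding K1_def using kron_carrier DA by auto
  have K2c: "K2 \<in> carrier_mat (2*n) (2*n)" unfolding K2_def using kron_carrier DB by auto
  have JtJ': "Jt * J = 1\<^sub>m (2*n)" unfolding Jt_def J_def by (rule JtJ)
  have JJt': "J * Jt = 1\<^sub>m (2*n)" unfolding Jt_def J_def by (rule JJt)
  define Nm where "Nm = Jt * (Mt * J)"
  have Nc: "Nm \<in> carrier_mat (2*n) (2*n)" unfolding Nm_def by (rule c2[OF Jtc c2[OF Mtc Jc]])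
  have NM: "Nm * M = 1\<^sub>m (2*n)" unfolding Nm_def L_n[OF Jtc Mc Jc Mtc] Ms JtJ' ..
  have MN: "M * Nm = 1\<^sub>m (2*n)" by (rule mat_mult_left_right_inverse[OF Nc Mc NM])
  have MJtMt: "M * (Jt * Mt) = Jt"
  proof -
    have "M * Nm * Jt = Jt" unfolding MN by (rule l1[OF Jtc])
    moreover have "M * Nm * Jt = M * (Jt * Mt) * (J * Jt)" unfolding Nm_def
      using Mc Jtc Mtc Jc by (simp add: a2 c2)
    ultimately show ?thesis unfolding JJt' using r1[OF c2[OF Mc c2[OF Jtc Mtc]]] by simp
  qed
  have MJMt: "M * (J * Mt) = J"
  proof -
    have "transpose_mat (M * (Jt * Mt)) = transpose_mat (Jt * Mt) * transpose_mat M"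
      by (rule transpose_mult[OF Mc c2[OF Jtc Mtc]])
    also have "transpose_mat (Jt * Mt) = transpose_mat Mt * transpose_mat Jt"
      by (rule transpose_mult[OF Jtc Mtc])
    also have "transpose_mat Mt = M" unfolding Mt_def by simp
    also have "transpose_mat Jt = J" unfolding Jt_def J_def by simp
    finally have eq: "transpose_mat (M * (Jt * Mt)) = M * J * transpose_mat M" .
    have "transpose_mat Jt = M * J * transpose_mat M" using eq unfolding MJtMt .
    hence "J = M * J * Mt" unfolding Mt_def Jt_def J_def by simp
    thus ?thesis using a2[OF Mc Jc Mtc] by simp
  qed
  define P where "P = Jt * (M * J)"
  have Pc: "P \<in> carrier_mat (2*n) (2*n)" unfolding P_def by (rule c2[OF Jtc c2[OF Mc Jc]])
  have PMt: "P * Mt = 1\<^sub>m (2*n)" unfolding P_def L_p[OF Jtc Mc Jc Mtc] MJMt JtJ' ..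
  have canc: "P * (Mt * X * M) * Nm = X" if X: "X \<in> carrier_mat (2*n) (2*n)" for X
    unfolding L_c1[OF Pc X Mc Mtc Nc] PMt MN using l1[OF X] r1[OF X] by simp
  have E: "Mt * (X * J * Y) * M = (Mt * X * M) * J * (Mt * Y * M)"
    if X: "X \<in> carrier_mat (2*n) (2*n)" and Y: "Y \<in> carrier_mat (2*n) (2*n)" for X Y
    unfolding L_E[OF Mtc X Mc Jc Y] MJMt L_E2[OF Mtc X Mc Jc Y] ..
  have HA': "Mt * A * M = K1" using HA unfolding Mt_def K1_def .
  have HB': "Mt * B * M = K2" using HB unfolding Mt_def K2_def .
  have KK: "K1 * J * K2 = K2 * J * K1" unfolding K1_def K2_def J_def by (rule kron_comm[OF DA DB])
  have AJB: "A * J * B \<in> carrier_mat (2*n) (2*n)" "B * J * A \<in> carrier_mat (2*n) (2*n)"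
    using c2[OF c2[OF Ac Jc] Bc] c2[OF c2[OF Bc Jc] Ac] by auto
  have "A * J * B = P * (Mt * (A * J * B) * M) * Nm" by (rule canc[OF AJB(1), symmetric])
  also have "Mt * (A * J * B) * M = K1 * J * K2" unfolding E[OF Ac Bc] HA' HB' ..
  also note KK
  also have "K2 * J * K1 = Mt * (B * J * A) * M" unfolding E[OF Bc Ac] HA' HB' ..
  also have "P * (Mt * (B * J * A) * M) * Nm = B * J * A" by (rule canc[OF AJB(2)])
  finally show ?thesis unfolding J_def .
qed



lemma sinv_exists:
  assumes pdA: "pos_def_mat (2*n) A" and pdB: "pos_def_mat (2*n) B"
    and comm: "A * Jmat n * B = B * Jmat n * A"
  shows "m \<le> n \<Longrightarrow> \<exists>b. sinv n A B m b"
proof (induction m)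
  case 0 show ?case using sinv_0 by blast
next
  case (Suc m)
  then obtain b where "sinv n A B m b" by auto
  with sinv_step[OF pdA pdB comm _] Suc.prems show ?case by auto
qed

lemma congr_entry:
  assumes M: "M \<in> carrier_mat N N" and K: "K \<in> carrier_mat N N" and i: "i < N" and j: "j < N"
  shows "(transpose_mat M * K * M) $$ (i,j) = bf K (col M i) (col M j)"
proof -
  have Mt: "transpose_mat M \<in> carrier_mat N N" using M by simp
  have "transpose_mat M * K * M = transpose_mat M * (K * M)" by (rule assoc_mult_mat[OF Mt K M])
  moreover have "(transpose_mat M * (K * M)) $$ (i,j) = row (transpose_mat M) i \<bullet> col (K * M) j"
    using i j M K by simp
  moreover have "row (transpose_mat M) i = col M i" using i M by simp
  moreover have "col (K * M) j = K *\<^sub>v col M j" using j M K by simp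
  ultimately show ?thesis unfolding bf_def by simp
qed

lemma from_sinv:
  assumes pdA: "pos_def_mat (2*n) A" and pdB: "pos_def_mat (2*n) B"
    and I: "sinv n A B n b"
  shows "\<exists>M DA DB. symplectic n M
            \<and> DA \<in> carrier_mat n n \<and> diagonal_mat DA \<and> (\<forall>i<n. DA $$ (i,i) > 0)
            \<and> DB \<in> carrier_mat n n \<and> diagonal_mat DB \<and> (\<forall>i<n. DB $$ (i,i) > 0)
            \<and> transpose_mat M * A * M = kron_mat DA (1\<^sub>m 2)
            \<and> transpose_mat M * B * M = kron_mat DB (1\<^sub>m 2)"
proof -
  note Ac = pd_carrier[OF pdA] and Bc = pd_carrier[OF pdB]
  note Jc = Jmat_carrier[of n]
  have bc: "\<forall>i<2*n. b i \<in> carrier_vec (2*n)"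
    and bJ: "\<forall>i<2*n. \<forall>j<2*n. bf (Jmat n) (b i) (b j) = jent i j"
    and bAB: "\<forall>i<2*n. \<forall>j<2*n. i \<noteq> j \<longrightarrow> bf A (b i) (b j) = 0 \<and> bf B (b i) (b j) = 0"
    and bpair: "\<forall>i<n. bf A (b (2*i)) (b (2*i)) = bf A (b (2*i+1)) (b (2*i+1)) \<and>
          bf B (b (2*i)) (b (2*i)) = bf B (b (2*i+1)) (b (2*i+1))"
    using I unfolding sinv_def by blast+
  define M where "M = mat (2*n) (2*n) (\<lambda>(i,j). b j $ i)"
  have Mc: "M \<in> carrier_mat (2*n) (2*n)" unfolding M_def by simp
  have colM: "col M j = b j" if "j < 2*n" for j
    unfolding M_def using that bc by (intro eq_vecI) auto
  have entry: "(transpose_mat M * K * M) $$ (i,j) = bf K (b i) (b j)"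
    if "K \<in> carrier_mat (2*n) (2*n)" "i < 2*n" "j < 2*n" for K i j
    using congr_entry[OF Mc that] colM that by simp
  have dimsK: "dim_row (transpose_mat M * K * M) = 2*n" "dim_col (transpose_mat M * K * M) = 2*n" for K
    using Mc by auto
  have b0: "b (2*i) \<noteq> 0\<^sub>v (2*n)" if "i < n" for i
  proof
    assume "b (2*i) = 0\<^sub>v (2*n)"
    moreover have "bf (Jmat n) (b (2*i)) (b (2*i+1)) = 1"
      using bJ that by (auto simp: jent_def)
    moreover have "b (2*i+1) \<in> carrier_vec (2*n)" using bc that by auto
    ultimately show False using bf_zero_l[OF Jc] by simp
  qed
  have symp: "symplectic n M" unfolding symplectic_def
  proof (intro conjI)
    show "M \<in> carrier_mat (2*n) (2*n)" by (rule Mc)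
    show "transpose_mat M * Jmat n * M = Jmat n"
    proof (rule eq_matI)
      fix i j assume "i < dim_row (Jmat n)" "j < dim_col (Jmat n)"
      hence i: "i < 2*n" and j: "j < 2*n" by auto
      show "(transpose_mat M * Jmat n * M) $$ (i,j) = Jmat n $$ (i,j)"
        unfolding entry[OF Jc i j] Jmat_index[OF i j] using bJ i j by simp
    qed (use Mc in auto)
  qed
  have diagK: "transpose_mat M * K * M = kron_mat (mat n n (\<lambda>(i,j). if i = j then bf K (b (2*i)) (b (2*i)) else 0)) (1\<^sub>m 2)"
    if K: "K \<in> carrier_mat (2*n) (2*n)" and off: "\<forall>i<2*n. \<forall>j<2*n. i \<noteq> j \<longrightarrow> bf K (b i) (b j) = 0"
      and pair: "\<forall>i<n. bf K (b (2*i)) (b (2*i)) = bf K (b (2*i+1)) (b (2*i+1))" for K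
  proof (rule eq_matI)
    fix i j assume "i < dim_row (kron_mat (mat n n (\<lambda>(i,j). if i = j then bf K (b (2*i)) (b (2*i)) else 0)) (1\<^sub>m 2 :: real mat))"
      "j < dim_col (kron_mat (mat n n (\<lambda>(i,j). if i = j then bf K (b (2*i)) (b (2*i)) else 0)) (1\<^sub>m 2 :: real mat))"
    hence i: "i < 2*n" and j: "j < 2*n" unfolding kron_mat_def by auto
    have i2: "i div 2 < n" and j2: "j div 2 < n" using i j by auto
    have rhs: "kron_mat (mat n n (\<lambda>(i,j). if i = j then bf K (b (2*i)) (b (2*i)) else 0)) (1\<^sub>m 2) $$ (i,j)
      = (if i div 2 = j div 2 then bf K (b (2*(i div 2))) (b (2*(i div 2))) else 0) * (if i mod 2 = j mod 2 then 1 else 0)"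
      unfolding kron_mat_def using i j i2 j2 by (simp add: mult.commute[of n])
    show "(transpose_mat M * K * M) $$ (i,j) = kron_mat (mat n n (\<lambda>(i,j). if i = j then bf K (b (2*i)) (b (2*i)) else 0)) (1\<^sub>m 2) $$ (i,j)"
    proof (cases "i = j")
      case True
      have "bf K (b i) (b i) = bf K (b (2*(i div 2))) (b (2*(i div 2)))"
      proof (cases "even i")
        case True thus ?thesis by simp
      next
        case False
        hence "i = 2*(i div 2) + 1" by presburger
        thus ?thesis using pair i2 by (metis)
      qed
      thus ?thesis unfolding rhs entry[OF K i j] using True by simp
    next
      case False
      have "i div 2 \<noteq> j div 2 \<or> i mod 2 \<noteq> j mod 2" using False by (metis div_mult_mod_eq)
      thus ?thesis unfolding rhs entry[OF K i j] using False off i j by auto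
    qed
  qed (use Mc in \<open>auto simp: kron_mat_def\<close>)
  define DA where "DA = mat n n (\<lambda>(i,j). if i = j then bf A (b (2*i)) (b (2*i)) else (0::real))"
  define DB where "DB = mat n n (\<lambda>(i,j). if i = j then bf B (b (2*i)) (b (2*i)) else (0::real))"
  have "transpose_mat M * A * M = kron_mat DA (1\<^sub>m 2)" unfolding DA_def
    by (rule diagK[OF Ac]) (use bAB bpair in auto)
  moreover have "transpose_mat M * B * M = kron_mat DB (1\<^sub>m 2)" unfolding DB_def
    by (rule diagK[OF Bc]) (use bAB bpair in auto)
  moreover have "DA \<in> carrier_mat n n" "DB \<in> carrier_mat n n" unfolding DA_def DB_def by auto
  moreover have "diagonal_mat DA" "diagonal_mat DB" unfolding DA_def DB_def diagonal_mat_def by auto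
  moreover have "\<forall>i<n. DA $$ (i,i) > 0" unfolding DA_def using pd_pos[OF pdA] bc b0 by auto
  moreover have "\<forall>i<n. DB $$ (i,i) > 0" unfolding DB_def using pd_pos[OF pdB] bc b0 by auto
  ultimately show ?thesis using symp by blast
qed


theorem mainTheorem6:
  fixes n :: nat and A B :: "real mat"
  assumes "pos_def_mat (2*n) A" and "pos_def_mat (2*n) B"
  shows "(\<exists>M DA DB. symplectic n M
            \<and> DA \<in> carrier_mat n n \<and> diagonal_mat DA \<and> (\<forall>i<n. DA $$ (i,i) > 0)
            \<and> DB \<in> carrier_mat n n \<and> diagonal_mat DB \<and> (\<forall>i<n. DB $$ (i,i) > 0)
            \<and> transpose_mat M * A * M = kron_mat DA (1\<^sub>m 2)
            \<and> transpose_mat M * B * M = kron_mat DB (1\<^sub>m 2))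
         \<longleftrightarrow> A * Jmat n * B = B * Jmat n * A"
proof
  assume "\<exists>M DA DB. symplectic n M
            \<and> DA \<in> carrier_mat n n \<and> diagonal_mat DA \<and> (\<forall>i<n. DA $$ (i,i) > 0)
            \<and> DB \<in> carrier_mat n n \<and> diagonal_mat DB \<and> (\<forall>i<n. DB $$ (i,i) > 0)
            \<and> transpose_mat M * A * M = kron_mat DA (1\<^sub>m 2)
            \<and> transpose_mat M * B * M = kron_mat DB (1\<^sub>m 2)"
  then obtain M DA DB where M: "symplectic n M" and DA: "DA \<in> carrier_mat n n" "diagonal_mat DA"
    and DB: "DB \<in> carrier_mat n n" "diagonal_mat DB"
    and HA: "transpose_mat M * A * M = kron_mat DA (1\<^sub>m 2)"
    and HB: "transpose_mat M * B * M = kron_mat DB (1\<^sub>m 2)" by blast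
  show "A * Jmat n * B = B * Jmat n * A"
    by (rule forward[OF pd_carrier[OF assms(1)] pd_carrier[OF assms(2)] M DA DB HA HB])
next
  assume comm: "A * Jmat n * B = B * Jmat n * A"
  obtain b where "sinv n A B n b" using sinv_exists[OF assms comm, of n] by auto
  thus "\<exists>M DA DB. symplectic n M
            \<and> DA \<in> carrier_mat n n \<and> diagonal_mat DA \<and> (\<forall>i<n. DA $$ (i,i) > 0)
            \<and> DB \<in> carrier_mat n n \<and> diagonal_mat DB \<and> (\<forall>i<n. DB $$ (i,i) > 0)
            \<and> transpose_mat M * A * M = kron_mat DA (1\<^sub>m 2)
            \<and> transpose_mat M * B * M = kron_mat DB (1\<^sub>m 2)"
    by (rule from_sinv[OF assms])
qed

end
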